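(* Fix $0<\varepsilon<1/4$ and $0<\beta<1/4$. Let $\delta(n)$ be a positive non-increasing sequence such that for every positive integer $n$, $$P_n:=\frac{e^\varepsilon}{e^\varepsilon+1}+(e^\varepsilon+1)\sum_{j=1}^n\delta(j)\le 1-\beta,$$ and such that $b(n):=1/\delta(n)$ is an integer for every $n$. Define $S(1)=2$ and $S(n+1)=b(n)^{S(n)}$. Then for every positive integer $n$ there exists a distribution $\mathcal{D}_n$ over databases $D\in[S(n)]^n$, where $[S(n)]=\{0,1,\dots,S(n)-1\}$, such that for every $(\varepsilon,\delta(n))$-differentially private mechanism $\mathcal{M}:[S(n)]^n\to[S(n)]$, $$\Pr[\min D\le \mathcal{M}(D)\le \max D]\le P_n,$$ where the probability is over $D\sim\mathcal{D}_n$ and the coins of $\mathcal{M}$.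
   Context: A randomized algorithm $M:X^n\to Y$ is $(\varepsilon,\delta)$-differentially private if for every two databases $D,D'\in X^n$ differing in exactly one row and every set $T\subseteq Y$, $\Pr[M(D)\in T]\le e^{\varepsilon}\Pr[M(D')\in T]+\delta$. *)

theory Defs
  imports "HOL-Probability.Probability"
begin

definition neighbors :: "'a list \<Rightarrow> 'a list \<Rightarrow> bool" where
  "neighbors D D' \<longleftrightarrow> length D = length D' \<and>
     card {i. i < length D \<and> D ! i \<noteq> D' ! i} = 1"

definition diff_private :: "'a list set \<Rightarrow> real \<Rightarrow> real \<Rightarrow> ('a list \<Rightarrow> 'b pmf) \<Rightarrow> bool" where
  "diff_private X eps del M \<longleftrightarrow>
     (\<forall>D\<in>X. \<forall>D'\<in>X. neighbors D D' \<longrightarrow>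
        (\<forall>T. measure_pmf.prob (M D) T \<le> exp eps * measure_pmf.prob (M D') T + del))"

definition dbs :: "nat \<Rightarrow> nat \<Rightarrow> nat list set" where
  "dbs S n = {D. length D = n \<and> set D \<subseteq> {..<S}}"

text \<open>The tower S(1) = 2, S(n+1) = b(n)^S(n) with b(n) = 1/delta(n) (an integer).
  Index 0 is unused.\<close>
fun Stower :: "(nat \<Rightarrow> real) \<Rightarrow> nat \<Rightarrow> nat" where
  "Stower \<delta> 0 = 0"
| "Stower \<delta> (Suc 0) = 2"
| "Stower \<delta> (Suc (Suc n)) = nat \<lfloor>1 / \<delta> (Suc n)\<rfloor> ^ Stower \<delta> (Suc n)"

end

theory Submission imports Defs begin

lemma prob_bind_pmf:
  "measure_pmf.prob (bind_pmf p f) A = measure_pmf.expectation p (\<lambda>x. measure_pmf.prob (f x) A)"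
proof -
  have int: "integrable (measure_pmf p) (\<lambda>x. measure_pmf.prob (f x) A)"
    by (rule measure_pmf.integrable_const_bound[where B=1]) auto
  have "ennreal (measure_pmf.prob (bind_pmf p f) A) = emeasure (bind_pmf p f) A"
    by (simp add: measure_pmf.emeasure_eq_measure)
  also have "\<dots> = (\<integral>\<^sup>+x. emeasure (f x) A \<partial>p)" by simp
  also have "\<dots> = (\<integral>\<^sup>+x. ennreal (measure_pmf.prob (f x) A) \<partial>p)"
    by (simp add: measure_pmf.emeasure_eq_measure)
  also have "\<dots> = ennreal (\<integral>x. measure_pmf.prob (f x) A \<partial>p)"
    by (rule nn_integral_eq_integral[OF int]) auto
  finally show ?thesis
    by (subst (asm) ennreal_inj) (auto intro: integral_nonneg_AE)
qed

lemma sum_split_mult: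
  fixes f :: "nat \<Rightarrow> real"
  shows "(\<Sum>w<a*c. f w) = (\<Sum>i<a. \<Sum>j<c. f (i*c+j))"
proof -
  have "(\<Sum>w<a*c. f w) = (\<Sum>i<a. sum f {i*c..<i*c+c})"
    by (rule sum.nat_group[symmetric])
  also have "\<dots> = (\<Sum>i<a. \<Sum>j<c. f (i*c+j))"
  proof (rule sum.cong[OF refl])
    fix i
    have "sum f {0+i*c..<c+i*c} = (\<Sum>j\<in>{0..<c}. f (j + i*c))"
      by (rule sum.shift_bounds_nat_ivl)
    then show "sum f {i*c..<i*c+c} = (\<Sum>j<c. f (i*c+j))"
      by (simp add: add.commute atLeast0LessThan)
  qed
  finally show ?thesis .
qed

lemma sum_prob_disj_le1:
  fixes N :: "nat pmf"
  shows "(\<Sum>d<b. measure_pmf.prob N {z. z div B = q*b + d}) \<le> 1"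
proof -
  have "(\<Sum>d<b. measure_pmf.prob N {z. z div B = q*b + d}) =
        measure_pmf.prob N (\<Union>d<b. {z. z div B = q*b + d})"
    by (rule measure_pmf.finite_measure_finite_Union[symmetric])
       (auto simp: disjoint_family_on_def)
  also have "\<dots> \<le> 1" by simp
  finally show ?thesis .
qed

lemma count_bound:
  fixes N :: "nat \<Rightarrow> nat pmf" and b S h :: nat
  assumes b: "b \<ge> 1" and h: "h < S"
  shows "(\<Sum>w<b^S. measure_pmf.prob (N (w div b^(S-h))) {z. z div b^(S-(h+1)) = w div b^(S-(h+1))})
          \<le> real (b^S) / real b"
proof -
  define B where "B = b^(S-(h+1))"
  have Bpos: "B > 0" using b by (simp add: B_def)
  have eS: "b^S = b^h * b * B"
  proof -
    have "b^S = b^(Suc h + (S - Suc h))" using h by simp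
    then show ?thesis by (simp add: B_def power_add mult.commute)
  qed
  have eh: "b^(S-h) = B * b"
    using h by (simp add: B_def power_Suc2[symmetric] Suc_diff_Suc)
  define P where "P = (\<lambda>q c. measure_pmf.prob (N q) {z. z div B = c})"
  have "(\<Sum>w<b^S. measure_pmf.prob (N (w div b^(S-h))) {z. z div b^(S-(h+1)) = w div b^(S-(h+1))})
       = (\<Sum>w<(b^h*b)*B. P (w div (B*b)) (w div B))"
    by (simp add: eS eh P_def B_def)
  also have "\<dots> = (\<Sum>i<b^h*b. \<Sum>j<B. P ((i*B+j) div (B*b)) ((i*B+j) div B))"
    by (rule sum_split_mult)
  also have "\<dots> = (\<Sum>i<b^h*b. \<Sum>j<B. P (i div b) i)"
  proof (intro sum.cong refl)
    fix i j assume "j \<in> {..<B}"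
    then have 1: "(i*B+j) div B = i" using Bpos by simp
    then have "(i*B+j) div (B*b) = i div b" by (simp add: div_mult2_eq)
    with 1 show "P ((i*B+j) div (B*b)) ((i*B+j) div B) = P (i div b) i" by simp
  qed
  also have "\<dots> = real B * (\<Sum>i<b^h*b. P (i div b) i)"
    by (simp add: sum_distrib_left)
  also have "(\<Sum>i<b^h*b. P (i div b) i) = (\<Sum>q<b^h. \<Sum>d<b. P ((q*b+d) div b) (q*b+d))"
    by (rule sum_split_mult)
  also have "\<dots> = (\<Sum>q<b^h. \<Sum>d<b. P q (q*b+d))"
    using b by (intro sum.cong refl) simp
  also have "\<dots> \<le> (\<Sum>q<b^h. 1)"
    by (rule sum_mono) (simp add: P_def sum_prob_disj_le1)
  finally have "(\<Sum>w<b^S. measure_pmf.prob (N (w div b^(S-h))) {z. z div b^(S-(h+1)) = w div b^(S-(h+1))})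
       \<le> real B * real (b^h)" by (simp add: mult_left_mono)
  also have "\<dots> = real (b^S) / real b"
    using b by (simp add: eS)
  finally show ?thesis .
qed


definition trunc :: "nat \<Rightarrow> nat \<Rightarrow> nat \<Rightarrow> nat \<Rightarrow> nat" where
  "trunc b S x w = w div b^(S-x) * b^(S-x)"
definition Yf :: "nat \<Rightarrow> nat \<Rightarrow> nat list \<Rightarrow> nat \<Rightarrow> nat list" where
  "Yf b S D w = map (\<lambda>x. trunc b S x w) D @ [w]"
definition gout :: "nat \<Rightarrow> nat \<Rightarrow> nat \<Rightarrow> nat \<Rightarrow> nat" where
  "gout b S w z = card {k. 1 \<le> k \<and> k \<le> S-1 \<and> z div b^(S-k) = w div b^(S-k)}"

lemma div_pow_down:
  fixes b :: nat
  assumes "j \<le> k" "k \<le> S"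
  shows "z div b^(S-j) = (z div b^(S-k)) div b^(k-j)"
proof -
  have "S - j = (S - k) + (k - j)" using assms by simp
  then show ?thesis by (simp add: power_add div_mult2_eq)
qed

lemma match_down:
  fixes b :: nat
  assumes "z div b^(S-k) = w div b^(S-k)" "j \<le> k" "k \<le> S"
  shows "z div b^(S-j) = w div b^(S-j)"
  using assms div_pow_down[OF assms(2,3)] by metis

lemma trunc_div:
  fixes b :: nat
  assumes "b \<ge> 1" "j \<le> x" "x \<le> S"
  shows "trunc b S x w div b^(S-j) = w div b^(S-j)"
proof -
  have p: "b^(S-x) > 0" using assms by simp
  have "trunc b S x w div b^(S-j) = (w div b^(S-x) * b^(S-x)) div b^(S-x) div b^(x-j)"
    using div_pow_down[OF assms(2,3)] by (simp add: trunc_def)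
  also have "\<dots> = w div b^(S-x) div b^(x-j)" using p by simp
  also have "\<dots> = w div b^(S-j)" using div_pow_down[OF assms(2,3)] by simp
  finally show ?thesis .
qed

lemma gout_less: "S \<ge> 1 \<Longrightarrow> gout b S w z < S"
proof -
  assume "S \<ge> 1"
  have "{k. 1 \<le> k \<and> k \<le> S-1 \<and> z div b^(S-k) = w div b^(S-k)} \<subseteq> {1..S-1}" by auto
  then have "gout b S w z \<le> card {1..S-1}" unfolding gout_def by (rule card_mono[rotated]) simp
  with \<open>S \<ge> 1\<close> show ?thesis by simp
qed

lemma interior_step:
  fixes b S :: nat and D :: "nat list"
  assumes b: "b \<ge> 1" and D: "D \<noteq> []" "set D \<subseteq> {..<S}"
    and z1: "Min (set (Yf b S D w)) \<le> z" and z2: "z \<le> Max (set (Yf b S D w))"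
  shows "(Min (set D) \<le> gout b S w z \<and> gout b S w z \<le> Max (set D))
         \<or> z div b^(S-(Max (set D)+1)) = w div b^(S-(Max (set D)+1))"
proof -
  define lo where "lo = Min (set D)"
  define hi where "hi = Max (set D)"
  have fin: "finite (set D)" "set D \<noteq> {}" using D by auto
  have lo_in: "lo \<in> set D" and hi_in: "hi \<in> set D" using fin by (auto simp: lo_def hi_def)
  have loS: "lo < S" and hiS: "hi < S" using lo_in hi_in D by auto
  have lo_le: "\<And>x. x \<in> set D \<Longrightarrow> lo \<le> x" and le_hi: "\<And>x. x \<in> set D \<Longrightarrow> x \<le> hi"
    using fin by (auto simp: lo_def hi_def)
  define G where "G = {k. 1 \<le> k \<and> k \<le> S-1 \<and> z div b^(S-k) = w div b^(S-k)}"
  have Gfin: "finite G" by (rule finite_subset[of _ "{1..S-1}"]) (auto simp: G_def)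
  have gG: "gout b S w z = card G" by (simp add: gout_def G_def)
  \<comment> \<open>all rows agree with w on the first lo digits\<close>
  have rows: "\<And>r. r \<in> set (Yf b S D w) \<Longrightarrow> r div b^(S-lo) = w div b^(S-lo)"
  proof -
    fix r assume "r \<in> set (Yf b S D w)"
    then have "r = w \<or> (\<exists>x\<in>set D. r = trunc b S x w)" by (auto simp: Yf_def)
    then show "r div b^(S-lo) = w div b^(S-lo)"
    proof
      assume "\<exists>x\<in>set D. r = trunc b S x w"
      then obtain x where x: "x \<in> set D" "r = trunc b S x w" by auto
      have "x \<le> S" using x D by auto
      then show ?thesis using trunc_div[OF b lo_le[OF x(1)]] x by simp
    qed simp
  qed
  have Yfin: "finite (set (Yf b S D w))" "set (Yf b S D w) \<noteq> {}" by (auto simp: Yf_def)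
  have mn: "Min (set (Yf b S D w)) div b^(S-lo) = w div b^(S-lo)"
    by (rule rows) (use Yfin in auto)
  have mx: "Max (set (Yf b S D w)) div b^(S-lo) = w div b^(S-lo)"
    by (rule rows) (use Yfin in auto)
  have zlo: "z div b^(S-lo) = w div b^(S-lo)"
    using div_le_mono[OF z1, of "b^(S-lo)"] div_le_mono[OF z2, of "b^(S-lo)"] mn mx by simp
  have "lo \<le> card G"
  proof -
    have "{1..lo} \<subseteq> G"
    proof
      fix k assume "k \<in> {1..lo}"
      then show "k \<in> G" using match_down[OF zlo, of k] loS by (auto simp: G_def)
    qed
    from card_mono[OF Gfin this] show ?thesis by simp
  qed
  moreover have "card G \<le> hi \<or> z div b^(S-(hi+1)) = w div b^(S-(hi+1))"
  proof (cases "z div b^(S-(hi+1)) = w div b^(S-(hi+1))")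
    case False
    have "G \<subseteq> {1..hi}"
    proof
      fix k assume k: "k \<in> G"
      show "k \<in> {1..hi}"
      proof (rule ccontr)
        assume "k \<notin> {1..hi}"
        with k have "hi + 1 \<le> k" "k \<le> S" by (auto simp: G_def)
        with k match_down[of z b S k w "hi+1"] False show False by (auto simp: G_def)
      qed
    qed
    from card_mono[OF _ this] show ?thesis by simp
  qed simp
  ultimately show ?thesis by (auto simp: gG lo_def hi_def)
qed

lemma nb_or_eq:
  assumes "length D = length D'" "card {i. i < length D \<and> D!i \<noteq> D'!i} \<le> 1"
  shows "D = D' \<or> neighbors D D'"
proof (cases "card {i. i < length D \<and> D!i \<noteq> D'!i} = 0")
  case True
  have "finite {i. i < length D \<and> D!i \<noteq> D'!i}" by simp
  with True have "{i. i < length D \<and> D!i \<noteq> D'!i} = {}" by simp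
  then have "D = D'" using assms(1) by (auto intro: nth_equalityI)
  then show ?thesis ..
next
  case False
  then have "card {i. i < length D \<and> D!i \<noteq> D'!i} = 1" using assms(2) by linarith
  with assms(1) show ?thesis by (simp add: neighbors_def)
qed

lemma dp_use:
  assumes "diff_private X eps del M" "D \<in> X" "D' \<in> X" "D = D' \<or> neighbors D D'"
    "eps \<ge> 0" "del \<ge> 0"
  shows "measure_pmf.prob (M D) T \<le> exp eps * measure_pmf.prob (M D') T + del"
  using assms(4)
proof
  assume "D = D'"
  have "measure_pmf.prob (M D) T \<le> exp eps * measure_pmf.prob (M D) T"
    using assms(5) by (simp add: mult_le_cancel_right1 measure_nonneg)
  with \<open>D = D'\<close> assms(6) show ?thesis by simp
next
  assume "neighbors D D'"
  with assms(1-3) show ?thesis by (auto simp: diff_private_def)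
qed

lemma dp_mono: "diff_private X e d M \<Longrightarrow> d \<le> d' \<Longrightarrow> diff_private X e d' M"
  unfolding diff_private_def by (meson add_left_mono order_trans)


definition Mred :: "nat \<Rightarrow> nat \<Rightarrow> (nat list \<Rightarrow> nat pmf) \<Rightarrow> nat list \<Rightarrow> nat pmf" where
  "Mred b S M' D = bind_pmf (pmf_of_set {..<b^S}) (\<lambda>w. map_pmf (gout b S w) (M' (Yf b S D w)))"
definition Dnext :: "nat \<Rightarrow> nat \<Rightarrow> nat list pmf \<Rightarrow> nat list pmf" where
  "Dnext b S Dp = bind_pmf Dp (\<lambda>D. map_pmf (Yf b S D) (pmf_of_set {..<b^S}))"
definition succ :: "nat list pmf \<Rightarrow> (nat list \<Rightarrow> nat pmf) \<Rightarrow> real" where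
  "succ Dp M = measure_pmf.prob (bind_pmf Dp (\<lambda>D. map_pmf (\<lambda>y. (D, y)) (M D)))
                 {(D, y). Min (set D) \<le> y \<and> y \<le> Max (set D)}"

lemma exp_W:
  fixes b S :: nat assumes "b \<ge> 1"
  shows "measure_pmf.expectation (pmf_of_set {..<b^S}) f = (\<Sum>w<b^S. f w) / real (b^S)"
proof -
  have "{..<b^S} \<noteq> {}" using assms by (simp add: lessThan_empty_iff)
  then show ?thesis by (subst integral_pmf_of_set) auto
qed

lemma trunc_le: "trunc b S x w \<le> w"
  by (simp add: trunc_def)

lemma Yf_dbs:
  assumes "D \<in> dbs S n" "w < b^S"
  shows "Yf b S D w \<in> dbs (b^S) (Suc n)"
  using assms trunc_le[of b S _ w] by (auto simp: dbs_def Yf_def intro: le_less_trans)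

lemma Yf_nb:
  assumes "neighbors D D'"
  shows "Yf b S D w = Yf b S D' w \<or> neighbors (Yf b S D w) (Yf b S D' w)"
proof (rule nb_or_eq)
  have l: "length D = length D'" using assms by (simp add: neighbors_def)
  then show "length (Yf b S D w) = length (Yf b S D' w)" by (simp add: Yf_def)
  have "{i. i < length (Yf b S D w) \<and> Yf b S D w ! i \<noteq> Yf b S D' w ! i}
         \<subseteq> {i. i < length D \<and> D!i \<noteq> D'!i}"
    using l by (auto simp: Yf_def nth_append less_Suc_eq)
  moreover have c: "card {i. i < length D \<and> D!i \<noteq> D'!i} = 1" using assms unfolding neighbors_def by blast
  ultimately show "card {i. i < length (Yf b S D w) \<and> Yf b S D w ! i \<noteq> Yf b S D' w ! i} \<le> 1"
    using card_mono[of "{i. i < length D \<and> D!i \<noteq> D'!i}"] by fastforce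
qed

lemma Mred_supp:
  assumes "S \<ge> 1" shows "set_pmf (Mred b S M' D) \<subseteq> {..<S}"
  using gout_less[OF assms] by (auto simp: Mred_def)

lemma Dnext_supp:
  assumes "b \<ge> 1" "set_pmf Dp \<subseteq> dbs S n"
  shows "set_pmf (Dnext b S Dp) \<subseteq> dbs (b^S) (Suc n)"
proof -
  have ne: "{..<b^S} \<noteq> {}" using assms by (simp add: lessThan_empty_iff)
  show ?thesis using assms Yf_dbs ne by (auto simp: Dnext_def)
qed

lemma prob_Mred:
  assumes "b \<ge> 1"
  shows "measure_pmf.prob (Mred b S M' D) T =
    (\<Sum>w<b^S. measure_pmf.prob (M' (Yf b S D w)) (gout b S w -` T)) / real (b^S)"
  unfolding Mred_def prob_bind_pmf measure_map_pmf exp_W[OF assms] ..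

lemma Mred_dp:
  assumes b: "b \<ge> 1" and e: "eps \<ge> 0" and d: "del \<ge> 0"
    and dp: "diff_private (dbs (b^S) (Suc n)) eps del M'"
  shows "diff_private (dbs S n) eps del (Mred b S M')"
  unfolding diff_private_def
proof (intro ballI impI allI)
  fix D D' T assume D: "D \<in> dbs S n" and D': "D' \<in> dbs S n" and nb: "neighbors D D'"
  have Tp: "real (b^S) > 0" using b by simp
  have "(\<Sum>w<b^S. measure_pmf.prob (M' (Yf b S D w)) (gout b S w -` T))
      \<le> (\<Sum>w<b^S. exp eps * measure_pmf.prob (M' (Yf b S D' w)) (gout b S w -` T) + del)"
  proof (rule sum_mono)
    fix w assume "w \<in> {..<b^S}"
    then show "measure_pmf.prob (M' (Yf b S D w)) (gout b S w -` T)
       \<le> exp eps * measure_pmf.prob (M' (Yf b S D' w)) (gout b S w -` T) + del"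
      by (intro dp_use[OF dp Yf_dbs[OF D] Yf_dbs[OF D'] Yf_nb[OF nb] e d]) auto
  qed
  also have "\<dots> = exp eps * (\<Sum>w<b^S. measure_pmf.prob (M' (Yf b S D' w)) (gout b S w -` T))
                  + real (b^S) * del"
    by (simp add: sum.distrib sum_distrib_left)
  finally have "(\<Sum>w<b^S. measure_pmf.prob (M' (Yf b S D w)) (gout b S w -` T)) / real (b^S)
     \<le> (exp eps * (\<Sum>w<b^S. measure_pmf.prob (M' (Yf b S D' w)) (gout b S w -` T))
                  + real (b^S) * del) / real (b^S)"
    using Tp by (simp add: divide_right_mono)
  also have "\<dots> = exp eps * ((\<Sum>w<b^S. measure_pmf.prob (M' (Yf b S D' w)) (gout b S w -` T)) / real (b^S)) + del"
    using Tp by (simp add: field_simps)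
  finally show "measure_pmf.prob (Mred b S M' D) T
      \<le> exp eps * measure_pmf.prob (Mred b S M' D') T + del"
    by (simp add: prob_Mred[OF b])
qed


lemma bad_bound:
  fixes b S n :: nat
  assumes b: "b \<ge> 1" and e: "eps \<ge> 0" and d: "del \<ge> 0"
    and dp: "diff_private (dbs (b^S) (Suc n)) eps del M'"
    and D: "D \<in> dbs S n" and Dne: "D \<noteq> []"
  shows "(\<Sum>w<b^S. measure_pmf.prob (M' (Yf b S D w))
           {z. z div b^(S-(Max (set D)+1)) = w div b^(S-(Max (set D)+1))}) / real (b^S)
         \<le> exp eps / real b + del"
proof -
  define h where "h = Max (set D)"
  have hin: "h \<in> set D" using Dne by (simp add: h_def)
  have hS: "h < S" using hin D by (auto simp: dbs_def)
  have xh: "\<And>x. x \<in> set D \<Longrightarrow> x \<le> h" by (simp add: h_def)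
  have xS: "\<And>x. x \<in> set D \<Longrightarrow> x < S" using D by (auto simp: dbs_def)
  define G where "G = (\<lambda>q. map (\<lambda>x. q div b^(h-x) * b^(S-x)) D @ [q * b^(S-h)])"
  define Y' where "Y' = (\<lambda>w. map (\<lambda>x. trunc b S x w) D @ [trunc b S h w])"
  define B where "B = (\<lambda>w::nat. {z::nat. z div b^(S-(h+1)) = w div b^(S-(h+1))})"
  have Y'G: "Y' w = G (w div b^(S-h))" for w
  proof -
    have "\<And>x. x \<in> set D \<Longrightarrow> trunc b S x w = w div b ^ (S - h) div b ^ (h - x) * b ^ (S - x)"
    proof -
      fix x assume "x \<in> set D"
      then have "w div b^(S-x) = w div b^(S-h) div b^(h-x)"
        using xh hS by (intro div_pow_down) auto
      then show "trunc b S x w = w div b ^ (S - h) div b ^ (h - x) * b ^ (S - x)"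
        unfolding trunc_def by simp
    qed
    then show ?thesis by (simp add: Y'_def G_def trunc_def)
  qed
  have Y'dbs: "Y' w \<in> dbs (b^S) (Suc n)" if "w < b^S" for w
    using D that trunc_le[of b S _ w] by (auto simp: dbs_def Y'_def intro: le_less_trans)
  have nb: "Yf b S D w = Y' w \<or> neighbors (Yf b S D w) (Y' w)" for w
  proof (rule nb_or_eq)
    show "length (Yf b S D w) = length (Y' w)" by (simp add: Yf_def Y'_def)
    have "{i. i < length (Yf b S D w) \<and> Yf b S D w ! i \<noteq> Y' w ! i} \<subseteq> {length D}"
      by (auto simp: Yf_def Y'_def nth_append less_Suc_eq)
    from card_mono[OF _ this]
    show "card {i. i < length (Yf b S D w) \<and> Yf b S D w ! i \<noteq> Y' w ! i} \<le> 1" by simp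
  qed
  have Tp: "real (b^S) > 0" using b by simp
  have "(\<Sum>w<b^S. measure_pmf.prob (M' (Yf b S D w)) (B w))
      \<le> (\<Sum>w<b^S. exp eps * measure_pmf.prob (M' (G (w div b^(S-h)))) (B w) + del)"
  proof (rule sum_mono)
    fix w assume "w \<in> {..<b^S}"
    then have "measure_pmf.prob (M' (Yf b S D w)) (B w) \<le> exp eps * measure_pmf.prob (M' (Y' w)) (B w) + del"
      by (intro dp_use[OF dp Yf_dbs[OF D] Y'dbs nb e d]) auto
    then show "measure_pmf.prob (M' (Yf b S D w)) (B w)
        \<le> exp eps * measure_pmf.prob (M' (G (w div b^(S-h)))) (B w) + del"
      by (simp add: Y'G)
  qed
  also have "\<dots> = exp eps * (\<Sum>w<b^S. measure_pmf.prob ((M' \<circ> G) (w div b^(S-h))) (B w)) + real (b^S) * del"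
    by (simp add: sum.distrib sum_distrib_left)
  also have "\<dots> \<le> exp eps * (real (b^S) / real b) + real (b^S) * del"
  proof -
    have "(\<Sum>w<b^S. measure_pmf.prob ((M' \<circ> G) (w div b^(S-h))) (B w)) \<le> real (b^S) / real b"
      using count_bound[OF b hS, of "M' \<circ> G"] by (simp add: B_def)
    then show ?thesis by (intro add_right_mono mult_left_mono) auto
  qed
  finally have "(\<Sum>w<b^S. measure_pmf.prob (M' (Yf b S D w)) (B w)) / real (b^S)
     \<le> (exp eps * (real (b^S) / real b) + real (b^S) * del) / real (b^S)"
    using Tp by (simp add: divide_right_mono)
  also have "\<dots> = exp eps / real b + del" using Tp by (simp add: field_simps)
  finally show ?thesis by (simp add: B_def h_def)
qed

lemma vimage_pair: "(\<lambda>y. (E, y)) -` {(D, y). P D y} = {y. P E y}"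
  by auto

lemma succ_eq:
  "succ Dp M = measure_pmf.expectation Dp
      (\<lambda>D. measure_pmf.prob (M D) {y. Min (set D) \<le> y \<and> y \<le> Max (set D)})"
  unfolding succ_def prob_bind_pmf measure_map_pmf vimage_pair ..


lemma succ_step:
  fixes b S n :: nat
  assumes b: "b \<ge> 1" and e: "eps \<ge> 0" and d: "del \<ge> 0"
    and dp: "diff_private (dbs (b^S) (Suc n)) eps del M'"
    and supp: "set_pmf Dp \<subseteq> dbs S n" and n1: "n \<ge> 1"
  shows "succ (Dnext b S Dp) M' \<le> succ Dp (Mred b S M') + (exp eps / real b + del)"
proof -
  define A where "A = {(D::nat list, y::nat). Min (set D) \<le> y \<and> y \<le> Max (set D)}"
  define W where "W = pmf_of_set {..<b^S}"
  define F where "F = (\<lambda>D. measure_pmf.prob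
      (bind_pmf W (\<lambda>w. map_pmf (\<lambda>y. (Yf b S D w, y)) (M' (Yf b S D w)))) A)"
  define C where "C = (\<lambda>D. measure_pmf.prob (Mred b S M' D) {y. Min (set D) \<le> y \<and> y \<le> Max (set D)})"
  define K where "K = exp eps / real b + del"
  have nxt: "succ (Dnext b S Dp) M' = measure_pmf.expectation Dp F"
    by (simp only: succ_def Dnext_def F_def W_def A_def bind_assoc_pmf bind_map_pmf prob_bind_pmf[of Dp])
  have cur: "succ Dp (Mred b S M') = measure_pmf.expectation Dp C"
    by (simp add: succ_eq C_def)
  have Tp: "real (b^S) > 0" using b by simp
  have pt: "F D \<le> C D + K" if DD: "D \<in> set_pmf Dp" for D
  proof -
    have Ddb: "D \<in> dbs S n" using DD supp by auto
    then have Dne: "D \<noteq> []" and DS: "set D \<subseteq> {..<S}" using n1 by (auto simp: dbs_def)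
    define Bd where "Bd = (\<lambda>w::nat. {z::nat. z div b^(S-(Max (set D)+1)) = w div b^(S-(Max (set D)+1))})"
    define I where "I = (\<lambda>E::nat list. {y::nat. Min (set E) \<le> y \<and> y \<le> Max (set E)})"
    have Fe: "F D = (\<Sum>w<b^S. measure_pmf.prob (M' (Yf b S D w)) (I (Yf b S D w))) / real (b^S)"
      unfolding F_def W_def prob_bind_pmf measure_map_pmf exp_W[OF b] A_def vimage_pair I_def ..
    have Ce: "C D = (\<Sum>w<b^S. measure_pmf.prob (M' (Yf b S D w)) (gout b S w -` I D)) / real (b^S)"
      unfolding C_def prob_Mred[OF b] I_def ..
    have "(\<Sum>w<b^S. measure_pmf.prob (M' (Yf b S D w)) (I (Yf b S D w)))
       \<le> (\<Sum>w<b^S. measure_pmf.prob (M' (Yf b S D w)) (gout b S w -` I D)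
                     + measure_pmf.prob (M' (Yf b S D w)) (Bd w))"
    proof (rule sum_mono)
      fix w
      have "I (Yf b S D w) \<subseteq> (gout b S w -` I D) \<union> Bd w"
        using interior_step[OF b Dne DS] by (auto simp: I_def Bd_def)
      then have "measure_pmf.prob (M' (Yf b S D w)) (I (Yf b S D w))
          \<le> measure_pmf.prob (M' (Yf b S D w)) ((gout b S w -` I D) \<union> Bd w)"
        by (rule measure_pmf.finite_measure_mono) simp
      also have "\<dots> \<le> measure_pmf.prob (M' (Yf b S D w)) (gout b S w -` I D)
                     + measure_pmf.prob (M' (Yf b S D w)) (Bd w)"
        by (rule measure_subadditive) (simp_all add: measure_pmf.emeasure_eq_measure)
      finally show "measure_pmf.prob (M' (Yf b S D w)) (I (Yf b S D w))
       \<le> measure_pmf.prob (M' (Yf b S D w)) (gout b S w -` I D)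
                     + measure_pmf.prob (M' (Yf b S D w)) (Bd w)" .
    qed
    then have "F D \<le> (\<Sum>w<b^S. measure_pmf.prob (M' (Yf b S D w)) (gout b S w -` I D)
                     + measure_pmf.prob (M' (Yf b S D w)) (Bd w)) / real (b^S)"
      unfolding Fe using Tp by (intro divide_right_mono) simp_all
    also have "\<dots> = C D + (\<Sum>w<b^S. measure_pmf.prob (M' (Yf b S D w)) (Bd w)) / real (b^S)"
      unfolding Ce by (simp add: sum.distrib add_divide_distrib)
    also have "\<dots> \<le> C D + K"
      using bad_bound[OF b e d dp Ddb Dne] by (simp add: Bd_def K_def)
    finally show ?thesis .
  qed
  have intF: "integrable (measure_pmf Dp) F"
    by (rule measure_pmf.integrable_const_bound[where B=1]) (auto simp: F_def)
  have intC: "integrable (measure_pmf Dp) C"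
    by (rule measure_pmf.integrable_const_bound[where B=1]) (auto simp: C_def)
  have "measure_pmf.expectation Dp F \<le> measure_pmf.expectation Dp (\<lambda>D. C D + K)"
    by (rule integral_mono_AE[OF intF]) (auto intro: intC AE_pmfI pt)
  also have "\<dots> = measure_pmf.expectation Dp C + K"
    using intC by (simp add: integral_add)
  finally show ?thesis by (simp add: nxt cur K_def)
qed


lemma base_case:
  fixes M :: "nat list \<Rightarrow> nat pmf" and e d :: real
  assumes e: "e \<ge> 0" and d: "d \<ge> 0" and dp: "diff_private (dbs 2 1) e d M"
  shows "succ (pmf_of_set {[0],[1]}) M \<le> exp e / (exp e + 1) + d"
proof -
  have I: "\<And>x::nat. {y::nat. Min (set [x]) \<le> y \<and> y \<le> Max (set [x])} = {x}" by auto
  have s: "succ (pmf_of_set {[0],[1]}) M =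
      (measure_pmf.prob (M [0]) {0} + measure_pmf.prob (M [1]) {1}) / 2"
  proof -
    have "{y::nat. Suc 0 \<le> y \<and> y \<le> Suc 0} = {Suc 0}" by auto
    then show ?thesis by (simp add: succ_eq integral_pmf_of_set I)
  qed
  have db: "[0] \<in> dbs 2 1" "[1] \<in> dbs 2 1" by (auto simp: dbs_def)
  have nb: "neighbors [0::nat] [1]" "neighbors [1::nat] [0]"
  proof -
    have "{i. i < length [0::nat] \<and> [0::nat]!i \<noteq> [1]!i} = {0}" by auto
    then show "neighbors [0::nat] [1]" by (simp add: neighbors_def)
    have "{i. i < length [1::nat] \<and> [1::nat]!i \<noteq> [0]!i} = {0}" by auto
    then show "neighbors [1::nat] [0]" by (simp add: neighbors_def)
  qed
  have sum1: "measure_pmf.prob N {0::nat} + measure_pmf.prob N {1} \<le> 1" for N :: "nat pmf"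
  proof -
    have "measure_pmf.prob N {0::nat} + measure_pmf.prob N {1} = measure_pmf.prob N ({0} \<union> {1})"
      by (rule measure_pmf.finite_measure_Union[symmetric]) auto
    then show ?thesis by simp
  qed
  define p0 where "p0 = measure_pmf.prob (M [0]) {0}"
  define r0 where "r0 = measure_pmf.prob (M [0]) {1}"
  define p1 where "p1 = measure_pmf.prob (M [1]) {1}"
  define r1 where "r1 = measure_pmf.prob (M [1]) {0}"
  have h1: "p0 \<le> exp e * r1 + d" unfolding p0_def r1_def
    using dp db nb by (auto simp: diff_private_def)
  have h2: "p1 \<le> exp e * r0 + d" unfolding p1_def r0_def
    using dp db nb by (auto simp: diff_private_def)
  have h3: "p0 + r0 \<le> 1" "p1 + r1 \<le> 1" using sum1 by (auto simp: p0_def r0_def p1_def r1_def add.commute)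
  have ep: "exp e > 0" by simp
  have "exp e * r1 \<le> exp e * (1 - p1)" using h3 ep by (intro mult_left_mono) auto
  moreover have "exp e * r0 \<le> exp e * (1 - p0)" using h3 ep by (intro mult_left_mono) auto
  ultimately have key: "(p0 + p1) * (exp e + 1) \<le> 2 * exp e + 2 * d"
    using h1 h2 by (simp add: algebra_simps)
  have "(p0 + p1) / 2 \<le> (exp e + d) / (exp e + 1)"
  proof -
    have "p0 + p1 \<le> (2 * exp e + 2 * d) / (exp e + 1)"
    proof -
      have "exp e + 1 > 0" using ep by linarith
      then show ?thesis using key by (simp add: pos_le_divide_eq)
    qed
    then show ?thesis by (simp add: field_simps)
  qed
  also have "\<dots> \<le> exp e / (exp e + 1) + d"
  proof -
    have "d / (exp e + 1) \<le> d" using divide_left_mono[of 1 "exp e + 1" d] d ep by simp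
    then show ?thesis by (simp add: add_divide_distrib)
  qed
  finally have X: "(p0 + p1) / 2 \<le> exp e / (exp e + 1) + d" .
  have "succ (pmf_of_set {[0],[1]}) M = (p0 + p1) / 2" using s by (simp only: p0_def p1_def)
  with X show ?thesis by linarith
qed


theorem lemma3p3:
  fixes \<epsilon> \<beta> :: real and \<delta> :: "nat \<Rightarrow> real"
  assumes eps: "0 < \<epsilon>" "\<epsilon> < 1/4"
    and beta: "0 < \<beta>" "\<beta> < 1/4"
    and delta_pos: "\<forall>n\<ge>1. 0 < \<delta> n"
    and delta_mono: "\<forall>n\<ge>1. \<delta> (Suc n) \<le> \<delta> n"
    and Pn: "\<forall>n\<ge>1. exp \<epsilon> / (exp \<epsilon> + 1) + (exp \<epsilon> + 1) * (\<Sum>j=1..n. \<delta> j) \<le> 1 - \<beta>"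
    and b_int: "\<forall>n\<ge>1. 1 / \<delta> n \<in> \<int>"
  shows "\<forall>n\<ge>1. \<exists>\<D> :: nat list pmf. set_pmf \<D> \<subseteq> dbs (Stower \<delta> n) n \<and>
           (\<forall>M :: nat list \<Rightarrow> nat pmf.
              (\<forall>D\<in>dbs (Stower \<delta> n) n. set_pmf (M D) \<subseteq> {..<Stower \<delta> n}) \<longrightarrow>
              diff_private (dbs (Stower \<delta> n) n) \<epsilon> (\<delta> n) M \<longrightarrow>
              measure_pmf.prob (bind_pmf \<D> (\<lambda>D. map_pmf (\<lambda>y. (D, y)) (M D)))
                 {(D, y). Min (set D) \<le> y \<and> y \<le> Max (set D)}
              \<le> exp \<epsilon> / (exp \<epsilon> + 1) + (exp \<epsilon> + 1) * (\<Sum>j=1..n. \<delta> j))"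
proof -
  define Q where "Q = (\<lambda>n. exp \<epsilon> / (exp \<epsilon> + 1) + (exp \<epsilon> + 1) * (\<Sum>j=1..n. \<delta> j) - exp \<epsilon> * \<delta> n)"
  define bb where "bb = (\<lambda>n. nat \<lfloor>1 / \<delta> n\<rfloor>)"
  have bb: "real (bb n) = 1 / \<delta> n \<and> bb n \<ge> 1" if "n \<ge> 1" for n
  proof -
    from b_int that obtain k where k: "1 / \<delta> n = of_int k" by (auto elim: Ints_cases)
    have "\<delta> n > 0" using delta_pos that by auto
    then have p: "1 / \<delta> n > 0" by simp
    then have "of_int k > (0::real)" using k by linarith
    then have "k \<ge> 1" by simp
    then show ?thesis using k by (simp add: bb_def)
  qed
  have Spos: "Stower \<delta> (Suc m) \<ge> 1" for m
  proof (induction m)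
    case (Suc m)
    have "bb (Suc m) \<ge> 1" using bb[of "Suc m"] by simp
    then have "1 \<le> nat \<lfloor>1 / \<delta> (Suc m)\<rfloor>" by (simp add: bb_def)
    then show ?case using one_le_power[of "nat \<lfloor>1 / \<delta> (Suc m)\<rfloor>" "Stower \<delta> (Suc m)"] by simp
  qed simp
  have claim: "\<exists>Dp :: nat list pmf. set_pmf Dp \<subseteq> dbs (Stower \<delta> (Suc m)) (Suc m) \<and>
           (\<forall>M :: nat list \<Rightarrow> nat pmf.
              (\<forall>D\<in>dbs (Stower \<delta> (Suc m)) (Suc m). set_pmf (M D) \<subseteq> {..<Stower \<delta> (Suc m)}) \<longrightarrow>
              diff_private (dbs (Stower \<delta> (Suc m)) (Suc m)) \<epsilon> (\<delta> (Suc m)) M \<longrightarrow>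
              succ Dp M \<le> Q (Suc m))" for m
  proof (induction m)
    case 0
    have d1: "\<delta> 1 > 0" using delta_pos by auto
    show ?case
    proof (intro exI conjI allI impI)
      show "set_pmf (pmf_of_set {[0::nat],[1]}) \<subseteq> dbs (Stower \<delta> (Suc 0)) (Suc 0)"
        by (auto simp: dbs_def)
      fix M :: "nat list \<Rightarrow> nat pmf"
      assume "diff_private (dbs (Stower \<delta> (Suc 0)) (Suc 0)) \<epsilon> (\<delta> (Suc 0)) M"
      then have "succ (pmf_of_set {[0],[1]}) M \<le> exp \<epsilon> / (exp \<epsilon> + 1) + \<delta> 1"
        using base_case[of \<epsilon> "\<delta> 1" M] eps d1 by simp
      also have "\<dots> = Q (Suc 0)" by (simp add: Q_def algebra_simps)
      finally show "succ (pmf_of_set {[0],[1]}) M \<le> Q (Suc 0)" .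
    qed
  next
    case (Suc m)
    define n where "n = Suc m"
    define S where "S = Stower \<delta> n"
    define b where "b = bb n"
    have b1: "b \<ge> 1" and rb: "real b = 1 / \<delta> n" using bb[of n] by (auto simp: b_def n_def)
    have S1: "S \<ge> 1" using Spos by (simp add: S_def n_def)
    have ST: "Stower \<delta> (Suc n) = b ^ S" by (simp add: n_def S_def b_def bb_def)
    have dn: "\<delta> n > 0" "\<delta> (Suc n) > 0" "\<delta> (Suc n) \<le> \<delta> n"
      using delta_pos delta_mono by (auto simp: n_def)
    from Suc.IH obtain Dp where Dp: "set_pmf Dp \<subseteq> dbs S n"
      and IH: "\<And>M. (\<forall>D\<in>dbs S n. set_pmf (M D) \<subseteq> {..<S}) \<Longrightarrow>
              diff_private (dbs S n) \<epsilon> (\<delta> n) M \<Longrightarrow> succ Dp M \<le> Q n"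
      by (auto simp: S_def n_def)
    show ?case unfolding n_def[symmetric] ST
    proof (intro exI conjI allI impI)
      show "set_pmf (Dnext b S Dp) \<subseteq> dbs (b^S) (Suc n)" by (rule Dnext_supp[OF b1 Dp])
      fix M' :: "nat list \<Rightarrow> nat pmf"
      assume dp: "diff_private (dbs (b^S) (Suc n)) \<epsilon> (\<delta> (Suc n)) M'"
      have dpr: "diff_private (dbs S n) \<epsilon> (\<delta> n) (Mred b S M')"
        using dp_mono[OF Mred_dp[OF b1 _ _ dp] dn(3)] eps dn by auto
      have ih: "succ Dp (Mred b S M') \<le> Q n"
        using IH[OF _ dpr] Mred_supp[OF S1] by blast
      have "succ (Dnext b S Dp) M' \<le> succ Dp (Mred b S M') + (exp \<epsilon> / real b + \<delta> (Suc n))"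
        using succ_step[OF b1 _ _ dp Dp] eps dn by (simp add: n_def)
      also have "\<dots> \<le> Q n + (exp \<epsilon> * \<delta> n + \<delta> (Suc n))"
        using ih rb by simp
      also have "\<dots> = Q (Suc n)"
        by (simp add: Q_def n_def algebra_simps)
      finally show "succ (Dnext b S Dp) M' \<le> Q (Suc n)" .
    qed
  qed
  show ?thesis
  proof (intro allI impI)
    fix n :: nat assume n: "n \<ge> 1"
    then obtain m where m: "n = Suc m" by (cases n) auto
    have "Q n \<le> exp \<epsilon> / (exp \<epsilon> + 1) + (exp \<epsilon> + 1) * (\<Sum>j=1..n. \<delta> j)"
    proof -
      have "0 < \<delta> n" using delta_pos n by auto
      then have "0 \<le> exp \<epsilon> * \<delta> n" by simp
      then show ?thesis by (simp add: Q_def)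
    qed
    with claim[of m] show "\<exists>\<D> :: nat list pmf. set_pmf \<D> \<subseteq> dbs (Stower \<delta> n) n \<and>
           (\<forall>M :: nat list \<Rightarrow> nat pmf.
              (\<forall>D\<in>dbs (Stower \<delta> n) n. set_pmf (M D) \<subseteq> {..<Stower \<delta> n}) \<longrightarrow>
              diff_private (dbs (Stower \<delta> n) n) \<epsilon> (\<delta> n) M \<longrightarrow>
              measure_pmf.prob (bind_pmf \<D> (\<lambda>D. map_pmf (\<lambda>y. (D, y)) (M D)))
                 {(D, y). Min (set D) \<le> y \<and> y \<le> Max (set D)}
              \<le> exp \<epsilon> / (exp \<epsilon> + 1) + (exp \<epsilon> + 1) * (\<Sum>j=1..n. \<delta> j))"
      unfolding m succ_def[symmetric] by (meson order_trans)
  qed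
qed

end
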